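(* (i) For $0\le\alpha<1$, the $\mathcal{S}^*_{car}$-radius of $\mathcal{S}^*(\alpha)$ is $1/(3-4\alpha)$ if $0\le\alpha\le1/4$ and $3/(7-4\alpha)$ if $1/4<\alpha<1$. (ii) For $0\le\alpha<1$, the $\mathcal{S}^*_{car}$-radius of $\mathcal{S}^*[1-\alpha,0]$ is $1/(2(1-\alpha))$ if $0<\alpha<1/2$ and $1$ if $1/2\le\alpha<1$. (iii) For $0<\alpha\le1$, the $\mathcal{S}^*_{car}$-radius of $\mathcal{S}^*[\alpha,-\alpha]$ is $1$ if $0<\alpha\le1/3$ and $1/(3\alpha)$ if $1/3<\alpha\le1$. (iv) For $M>1/2$, the $\mathcal{S}^*_{car}$-radius of $\mathcal{S}^*[1,-(M-1)/M]$ is $M/(3M-1)$.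
   Context: $\mathbb{D}=\{z:|z|<1\}$; $\mathcal{A}$ is the class of analytic $f$ on $\mathbb{D}$ with $f(0)=0$, $f'(0)=1$. $F\prec G$ means $F=G\circ w$ for an analytic $w:\mathbb{D}\to\mathbb{D}$ with $w(0)=0$. $\mathcal{S}^*_{car}$ is the class of $f\in\mathcal{A}$ with $zf'(z)/f(z)\prec 1+z+z^2/2$; $\mathcal{S}^*(\alpha)$ is the class of $f\in\mathcal{A}$ with $\operatorname{Re}(zf'(z)/f(z))>\alpha$ on $\mathbb{D}$; for $-1\le B<A\le1$, $\mathcal{S}^*[A,B]$ is the class of $f\in\mathcal{A}$ with $zf'(z)/f(z)\prec(1+Az)/(1+Bz)$. For a class $\mathcal{F}\subseteq\mathcal{A}$, the $\mathcal{S}^*_{car}$-radius of $\mathcal{F}$ is the supremum of all $r\in(0,1]$ such that $f(rz)/r\in\mathcal{S}^*_{car}$ for every $f\in\mathcal{F}$. *)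

theory Defs
  imports "HOL-Analysis.Analysis"
begin

definition unit_disk :: "complex set" where
  "unit_disk = ball 0 1"

definition class_A :: "(complex \<Rightarrow> complex) set" where
  "class_A = {f. f holomorphic_on unit_disk \<and> f 0 = 0 \<and> deriv f 0 = 1}"

definition subordinate :: "(complex \<Rightarrow> complex) \<Rightarrow> (complex \<Rightarrow> complex) \<Rightarrow> bool" where
  "subordinate F G \<longleftrightarrow> (\<exists>w. w holomorphic_on unit_disk \<and> w ` unit_disk \<subseteq> unit_disk
      \<and> w 0 = 0 \<and> (\<forall>z\<in>unit_disk. F z = G (w z)))"

definition starq :: "(complex \<Rightarrow> complex) \<Rightarrow> complex \<Rightarrow> complex" where
  "starq f z = (if z = 0 then 1 else z * deriv f z / f z)"

definition S_car :: "(complex \<Rightarrow> complex) set" where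
  "S_car = {f \<in> class_A. subordinate (starq f) (\<lambda>z. 1 + z + z\<^sup>2 / 2)}"

definition S_star_order :: "real \<Rightarrow> (complex \<Rightarrow> complex) set" where
  "S_star_order \<alpha> = {f \<in> class_A. \<forall>z\<in>unit_disk. Re (starq f z) > \<alpha>}"

definition S_janowski :: "real \<Rightarrow> real \<Rightarrow> (complex \<Rightarrow> complex) set" where
  "S_janowski A B = {f \<in> class_A.
      subordinate (starq f) (\<lambda>z. (1 + of_real A * z) / (1 + of_real B * z))}"

definition car_radius :: "(complex \<Rightarrow> complex) set \<Rightarrow> real" where
  "car_radius F = Sup {r. 0 < r \<and> r \<le> 1 \<and>
      (\<forall>f\<in>F. (\<lambda>z. f (of_real r * z) / of_real r) \<in> S_car)}"

end

theory Submission
  imports Defs "HOL-Complex_Analysis.Complex_Analysis"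
begin


definition inOm :: "complex \<Rightarrow> bool" where
  "inOm p \<longleftrightarrow> cmod (2*p-1) ^ 2 - 2 * Re (2*p-1) < 2 * cmod (2*p-1)"

lemma cmod_sq: "cmod z ^ 2 = Re z ^ 2 + Im z ^ 2"
  by (simp add: cmod_def)

lemma inOm_csqrt:
  assumes "inOm p"
  shows "cmod (csqrt (2*p-1) - 1) < 1" "2*p-1 \<notin> \<real>\<^sub>\<le>\<^sub>0"
proof -
  define q where "q = 2*p-1"
  define u where "u = csqrt q"
  have h: "cmod q ^ 2 - 2 * Re q < 2 * cmod q" using assms by (simp add: inOm_def q_def)
  have nq: "cmod q \<ge> 0" by simp
  have Reu: "Re u = sqrt ((cmod q + Re q)/2)" by (simp add: u_def)
  have "(cmod q / 2)^2 < (cmod q + Re q)/2" using h by (simp add: power2_eq_square field_simps)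
  hence "sqrt ((cmod q / 2)^2) < Re u" unfolding Reu using real_sqrt_less_iff by blast
  hence lt: "cmod q / 2 < Re u" using nq by simp
  have nu: "cmod u ^ 2 = cmod q" by (simp add: u_def)
  have e1: "cmod (u - 1) ^ 2 = (Re u - 1)^2 + Im u ^ 2" by (simp add: cmod_sq)
  have e2: "cmod u ^ 2 = Re u ^ 2 + Im u ^ 2" by (simp add: cmod_sq)
  have "cmod (u - 1) ^ 2 = cmod u ^ 2 - 2 * Re u + 1"
    unfolding e1 e2 by (simp add: power2_eq_square algebra_simps)
  also have "\<dots> < 1" using nu lt by simp
  finally have "cmod (u - 1) ^ 2 < 1 ^ 2" by simp
  thus "cmod (csqrt (2*p-1) - 1) < 1" unfolding u_def q_def
    using power_less_imp_less_base by fastforce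
  show "2*p-1 \<notin> \<real>\<^sub>\<le>\<^sub>0"
  proof
    assume "2*p-1 \<in> \<real>\<^sub>\<le>\<^sub>0"
    hence "Im q = 0" "Re q \<le> 0" by (auto simp: complex_nonpos_Reals_iff q_def)
    hence "cmod q = - Re q" by (simp add: cmod_def)
    with h show False by (simp add: power2_eq_square)
  qed
qed

lemma phi_inOm:
  assumes "cmod w < 1"
  shows "inOm (1 + w + w\<^sup>2/2)"
proof -
  define x where "x = 1 + Re w"
  define y where "y = Im w"
  have N: "x^2 + y^2 < 2*x" using assms unfolding x_def y_def
    by (simp add: cmod_def power2_eq_square algebra_simps)
  have q: "2*(1 + w + w\<^sup>2/2) - 1 = (1+w)^2" by (simp add: power2_eq_square algebra_simps)
  have c: "cmod ((1+w)^2) = x^2+y^2"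
    by (simp add: norm_power cmod_sq x_def y_def)
  have r: "Re ((1+w)^2) = x^2 - y^2"
    by (simp add: power2_eq_square x_def y_def algebra_simps)
  have "(x^2+y^2)^2 < (2*x)^2"
    using N by (intro power_strict_mono) auto
  hence "(x^2+y^2)^2 - 2*(x^2-y^2) < 2*(x^2+y^2)"
    by (simp add: power2_eq_square algebra_simps)
  thus ?thesis unfolding inOm_def q c r .
qed

lemma not_inOm_real:
  assumes "x \<le> 1/2 \<or> x \<ge> 5/2"
  shows "\<not> inOm (complex_of_real x)"
proof
  assume "inOm (complex_of_real x)"
  moreover have e: "2*complex_of_real x - 1 = complex_of_real (2*x-1)" by simp
  ultimately have h: "\<bar>2*x-1\<bar>^2 - 2*(2*x-1) < 2*\<bar>2*x-1\<bar>" unfolding inOm_def e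
    by (simp only: norm_of_real Re_complex_of_real)
  show False
  proof (cases "x \<le> 1/2")
    case True
    hence a: "\<bar>2*x-1\<bar> = 1 - 2*x" by simp
    have "0 \<le> (2*x-1)^2" by simp
    then show ?thesis using h unfolding a by (simp add: power2_eq_square algebra_simps)
  next
    case False
    hence x: "x \<ge> 5/2" using assms by auto
    hence a: "\<bar>2*x-1\<bar> = 2*x-1" by simp
    have "0 \<le> (2*x-1)*(2*x-5)" using x by (intro mult_nonneg_nonneg) auto
    then show ?thesis using h unfolding a by (simp add: power2_eq_square algebra_simps)
  qed
qed

lemma subord_from_inOm:
  assumes holP: "P holomorphic_on unit_disk" and P0: "P 0 = 1"
    and om: "\<And>z. z \<in> unit_disk \<Longrightarrow> inOm (P z)"
    and eq: "\<And>z. z \<in> unit_disk \<Longrightarrow> F z = P z"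
  shows "subordinate F (\<lambda>z. 1 + z + z\<^sup>2/2)"
  unfolding subordinate_def
proof (intro exI conjI ballI)
  define w where "w = (\<lambda>z. csqrt (2 * P z - 1) - 1)"
  show "w holomorphic_on unit_disk" unfolding w_def
    by (intro holomorphic_intros holP) (use inOm_csqrt(2)[OF om] in auto)
  show "w ` unit_disk \<subseteq> unit_disk"
    using inOm_csqrt(1)[OF om] by (auto simp: w_def unit_disk_def dist_norm norm_minus_commute)
  show "w 0 = 0" by (simp add: w_def P0)
  fix z assume z: "z \<in> unit_disk"
  have "1 + w z + (w z)\<^sup>2/2 = (1 + (csqrt (2 * P z - 1))^2)/2"
    by (simp add: w_def power2_eq_square field_simps)
  also have "\<dots> = P z" by simp
  finally show "F z = 1 + w z + (w z)\<^sup>2/2" using eq[OF z] by simp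
qed



lemma open_disk: "open unit_disk" by (simp add: unit_disk_def)

lemma disk_iff: "z \<in> unit_disk \<longleftrightarrow> cmod z < 1" by (simp add: unit_disk_def)

lemma scale_in_disk:
  assumes "0 < r" "r \<le> 1" "z \<in> unit_disk"
  shows "complex_of_real r * z \<in> unit_disk"
proof -
  have "cmod (complex_of_real r * z) = r * cmod z" using assms by (simp add: norm_mult)
  also have "\<dots> \<le> cmod z" using assms by (simp add: mult_left_le_one_le)
  finally show ?thesis using assms by (simp add: disk_iff)
qed

lemma scale_class_A:
  assumes f: "f \<in> class_A" and r: "0 < r" "r \<le> 1"
  defines "g \<equiv> (\<lambda>z. f (complex_of_real r * z) / complex_of_real r)"
  shows "g \<in> class_A" "\<And>z. z \<in> unit_disk \<Longrightarrow> starq g z = starq f (complex_of_real r * z)"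
proof -
  have holf: "f holomorphic_on unit_disk" and f0: "f 0 = 0" and d0: "deriv f 0 = 1"
    using f by (auto simp: class_A_def)
  have rne: "complex_of_real r \<noteq> 0" using r by simp
  have D: "(g has_field_derivative deriv f (complex_of_real r * z)) (at z)" if z: "z \<in> unit_disk" for z
  proof -
    have rz: "complex_of_real r * z \<in> unit_disk" using scale_in_disk[OF r z] .
    have df: "(f has_field_derivative deriv f (complex_of_real r * z)) (at (complex_of_real r * z))"
      using holomorphic_derivI[OF holf open_disk rz] by simp
    have "((\<lambda>z. f (complex_of_real r * z)) has_field_derivative
           deriv f (complex_of_real r * z) * complex_of_real r) (at z)"
    proof -
      have lin: "((\<lambda>z. complex_of_real r * z) has_field_derivative complex_of_real r) (at z)"
        by (auto intro!: derivative_eq_intros)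
      show ?thesis
        using DERIV_chain2[where f=f and g="\<lambda>z. complex_of_real r * z" and x=z and s=UNIV, OF df lin]
        by simp
    qed
    hence "(g has_field_derivative
           deriv f (complex_of_real r * z) * complex_of_real r / complex_of_real r) (at z)"
      unfolding g_def by (intro DERIV_cdivide)
    thus ?thesis using rne by simp
  qed
  have "g holomorphic_on unit_disk"
    using D by (auto simp: holomorphic_on_open[OF open_disk])
  moreover have "g 0 = 0" by (simp add: g_def f0)
  moreover have "deriv g 0 = 1"
    using DERIV_imp_deriv[OF D[of 0]] d0 by (simp add: unit_disk_def)
  ultimately show "g \<in> class_A" by (simp add: class_A_def)
  fix z assume z: "z \<in> unit_disk"
  show "starq g z = starq f (complex_of_real r * z)"
  proof (cases "z = 0")
    case True thus ?thesis by (simp add: starq_def)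
  next
    case False
    have dg: "deriv g z = deriv f (complex_of_real r * z)" using DERIV_imp_deriv[OF D[OF z]] .
    show ?thesis using False rne unfolding starq_def dg
      by (cases "f (complex_of_real r * z) = 0") (auto simp: g_def field_simps)
  qed
qed

lemma starq_holo:
  assumes f: "f \<in> class_A" and nz: "\<And>z. z \<in> unit_disk \<Longrightarrow> z \<noteq> 0 \<Longrightarrow> f z \<noteq> 0"
  shows "starq f holomorphic_on unit_disk"
proof -
  have holf: "f holomorphic_on unit_disk" and f0: "f 0 = 0" and d0: "deriv f 0 = 1"
    using f by (auto simp: class_A_def)
  define h where "h = (\<lambda>z. if z = 0 then deriv f 0 else (f z - f 0) / (z - 0))"
  have holh: "h holomorphic_on unit_disk"
    unfolding h_def by (rule pole_lemma_open[OF holf open_disk])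
  have fh: "f z = z * h z" for z by (simp add: h_def f0)
  have hnz: "h z \<noteq> 0" if "z \<in> unit_disk" for z
    using nz[OF that] d0 by (auto simp: h_def f0)
  have eq: "starq f z = 1 + z * deriv h z / h z" if z: "z \<in> unit_disk" for z
  proof -
    have dh: "(h has_field_derivative deriv h z) (at z)"
      using holomorphic_derivI[OF holh open_disk z] by simp
    have "((\<lambda>z. z * h z) has_field_derivative h z + z * deriv h z) (at z)"
      using dh by (auto intro!: derivative_eq_intros)
    hence "(f has_field_derivative h z + z * deriv h z) (at z)"
      by (rule has_field_derivative_transform_within_open[OF _ open_disk z]) (simp add: fh)
    hence df: "deriv f z = h z + z * deriv h z" by (rule DERIV_imp_deriv)
    show ?thesis
    proof (cases "z = 0")
      case True thus ?thesis by (simp add: starq_def)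
    next
      case False
      then show ?thesis using hnz[OF z] unfolding starq_def df fh
        by (simp add: field_simps)
    qed
  qed
  have "(\<lambda>z. 1 + z * deriv h z / h z) holomorphic_on unit_disk"
    by (intro holomorphic_intros holh open_disk) (use hnz in auto)
  thus ?thesis by (rule holomorphic_transform) (simp add: eq)
qed

lemma exists_with_starq:
  assumes holG: "G holomorphic_on unit_disk" and G0: "G 0 = 1"
  shows "\<exists>f\<in>class_A. \<forall>z\<in>unit_disk. starq f z = G z"
proof -
  define k where "k = (\<lambda>z. if z = 0 then deriv G 0 else (G z - G 0) / (z - 0))"
  have holk: "k holomorphic_on unit_disk"
    unfolding k_def by (rule pole_lemma_open[OF holG open_disk])
  obtain g0 where g0: "\<And>x. x \<in> unit_disk \<Longrightarrow> (g0 has_field_derivative k x) (at x within unit_disk)"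
    using holomorphic_convex_primitive'[OF _ open_disk holk] by (auto simp: unit_disk_def)
  define g where "g = (\<lambda>z. g0 z - g0 0)"
  have dg: "(g has_field_derivative k x) (at x)" if "x \<in> unit_disk" for x
    using g0[OF that] at_within_open[OF that open_disk] unfolding g_def
    by (auto intro!: derivative_eq_intros)
  define f where "f = (\<lambda>z. z * exp (g z))"
  have df: "(f has_field_derivative exp (g z) + z * (exp (g z) * k z)) (at z)"
    if "z \<in> unit_disk" for z
    unfolding f_def using dg[OF that] by (auto intro!: derivative_eq_intros)
  have "f holomorphic_on unit_disk"
    using df by (auto simp: holomorphic_on_open[OF open_disk])
  moreover have "f 0 = 0" by (simp add: f_def)
  moreover have "deriv f 0 = 1"
    using DERIV_imp_deriv[OF df[of 0]] by (simp add: unit_disk_def g_def)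
  ultimately have fA: "f \<in> class_A" by (simp add: class_A_def)
  have "starq f z = G z" if z: "z \<in> unit_disk" for z
  proof (cases "z = 0")
    case True thus ?thesis by (simp add: starq_def G0)
  next
    case False
    have kz: "z * k z = G z - 1" using False by (simp add: k_def G0)
    have "starq f z = z * (exp (g z) + z * (exp (g z) * k z)) / (z * exp (g z))"
      using False DERIV_imp_deriv[OF df[OF z]] by (simp add: starq_def f_def)
    also have "\<dots> = 1 + z * k z" using False by (simp add: field_simps)
    finally show ?thesis using kz by simp
  qed
  with fA show ?thesis by blast
qed



lemma geo_real:
  fixes a R x d :: real
  assumes R: "R \<ge> 0" and d: "d \<ge> 0" and eq: "R^2 - 2*a*x + a^2 = d^2"
    and da: "d < a" and d4: "d < 4 - a" and tri: "R \<le> d + a"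
  shows "R^2 - 2*x < 2*R"
proof -
  have a0: "a > 0" using d da by linarith
  have key: "a * (R^2 - 2*x) = a*R^2 - R^2 - a^2 + d^2" using eq by (simp add: algebra_simps)
  have "a * (R^2 - 2*x) < a * (2*R)"
  proof (cases "a \<le> 2")
    case True
    have "d^2 < a^2" using d da by (simp add: power_strict_mono)
    hence "a * (R^2 - 2*x) < (a-1)*R^2" using key by (simp add: algebra_simps)
    also have "(a-1)*R^2 \<le> a * (2*R)"
    proof (cases "a \<le> 1")
      case True
      have "(a-1)*R^2 \<le> 0" using True by (simp add: mult_nonpos_nonneg)
      also have "0 \<le> a*(2*R)" using a0 R by simp
      finally show ?thesis .
    next
      case False
      have "R < 2*a" using tri da by linarith
      hence "(a-1)*R \<le> (a-1)*(2*a)" using False by (intro mult_left_mono) auto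
      also have "\<dots> \<le> 2*a" using False \<open>a \<le> 2\<close> a0
        by (simp add: mult_right_le_one_le mult.commute)
      finally have "R * ((a-1)*R) \<le> R*(2*a)" using R by (intro mult_left_mono) auto
      thus ?thesis by (simp add: power2_eq_square algebra_simps)
    qed
    finally show ?thesis .
  next
    case False
    have "d^2 < (4-a)^2" using d d4 by (simp add: power_strict_mono)
    hence "a * (R^2 - 2*x) < (a-1)*R^2 + 16 - 8*a" using key by (simp add: power2_eq_square algebra_simps)
    also have "\<dots> \<le> a * (2*R)"
    proof -
      have "R - 4 \<le> 0" using tri d4 by linarith
      moreover have "(a-1)*R \<ge> 0" using False R by simp
      hence "(a-1)*R + 2*a - 4 \<ge> 0" using False by linarith
      ultimately have "(R-4)*((a-1)*R + 2*a - 4) \<le> 0" by (simp add: mult_nonpos_nonneg)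
      thus ?thesis by (simp add: power2_eq_square algebra_simps)
    qed
    finally show ?thesis .
  qed
  thus ?thesis using a0 by simp
qed

lemma disk_inOm:
  fixes c :: real
  assumes "cmod (p - complex_of_real c) < c - 1/2" "cmod (p - complex_of_real c) < 5/2 - c"
  shows "inOm p"
proof -
  define q where "q = 2*p - 1"
  define a where "a = 2*c - 1"
  have dq: "cmod (q - complex_of_real a) = 2 * cmod (p - complex_of_real c)"
  proof -
    have e: "q - complex_of_real a = 2 * (p - complex_of_real c)" by (simp add: q_def a_def algebra_simps)
    show ?thesis unfolding e norm_mult by simp
  qed
  have e1: "cmod q ^2 = Re q ^2 + Im q ^2" by (rule cmod_sq)
  have e2: "cmod (q - complex_of_real a) ^2 = (Re q - a) ^2 + Im q ^2" by (simp add: cmod_sq)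
  have eq: "cmod q ^2 - 2*a*Re q + a^2 = cmod (q - complex_of_real a) ^2"
    unfolding e1 e2 by (simp add: power2_eq_square algebra_simps)
  have tri: "cmod q \<le> cmod (q - complex_of_real a) + a"
  proof -
    have "cmod q \<le> cmod (q - complex_of_real a) + cmod (complex_of_real a)"
      using norm_triangle_ineq[of "q - complex_of_real a" "complex_of_real a"] by simp
    moreover have "a > 0" using assms norm_ge_zero[of "p - complex_of_real c"] unfolding a_def by linarith
    hence "cmod (complex_of_real a) = a" by (simp only: norm_of_real abs_of_pos)
    ultimately show ?thesis by simp
  qed
  have "cmod q ^2 - 2 * Re q < 2 * cmod q"
    by (rule geo_real[OF _ _ eq _ _ tri]) (use assms dq a_def in auto)
  thus ?thesis by (simp add: inOm_def q_def)
qed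

definition Gj :: "real \<Rightarrow> real \<Rightarrow> complex \<Rightarrow> complex" where
  "Gj A B = (\<lambda>z. (1 + of_real A * z) / (1 + of_real B * z))"

lemma Gj_real: "1 + B*x \<noteq> 0 \<Longrightarrow> Gj A B (complex_of_real x) = complex_of_real ((1 + A*x)/(1+B*x))"
proof -
  assume h: "1 + B*x \<noteq> 0"
  have "1 + complex_of_real B * complex_of_real x = complex_of_real (1 + B*x)" by simp
  moreover have "1 + complex_of_real A * complex_of_real x = complex_of_real (1 + A*x)" by simp
  ultimately show ?thesis unfolding Gj_def by (simp only: of_real_divide)
qed

lemma Gj_circle:
  assumes B: "\<bar>B\<bar> \<le> 1" and w: "cmod w = s" and s: "s < 1"
  shows "cmod (Gj A B w - complex_of_real ((1 - A*B* s^2)/(1 - B^2* s^2)))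
           = \<bar>A - B\<bar> * s / (1 - B^2* s^2)"
proof -
  have s0: "s \<ge> 0" using w by auto
  have Bs: "\<bar>B\<bar> * s < 1" using B s s0
    by (metis abs_ge_zero le_less_trans mult_left_le_one_le)
  have D: "1 - B^2* s^2 > 0"
  proof -
    have "(\<bar>B\<bar>* s)^2 < 1" using Bs s0 by (simp add: abs_square_less_1 )
    thus ?thesis by (simp add: power_mult_distrib)
  qed
  have nz: "1 + complex_of_real B * w \<noteq> 0"
  proof
    assume "1 + complex_of_real B * w = 0"
    hence "complex_of_real B * w = -1" by (simp add: add_eq_0_iff)
    hence "cmod (complex_of_real B * w) = 1" by simp
    thus False using Bs w by (simp add: norm_mult)
  qed
  have "1 - B^2* s^2 \<noteq> 0" using D by linarith
  hence Dc: "complex_of_real (1 - B^2* s^2) \<noteq> 0" by (metis of_real_eq_0_iff)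
  have Dc': "(complex_of_real B)^2 * (complex_of_real s)^2 \<noteq> 1"
  proof -
    have "(complex_of_real B)^2 * (complex_of_real s)^2 = complex_of_real (B^2* s^2)" by simp
    moreover have "B^2* s^2 \<noteq> 1" using D by simp
    ultimately show ?thesis by (simp only: of_real_eq_1_iff not_False_eq_True)
  qed
  have id: "Gj A B w - complex_of_real ((1 - A*B* s^2)/(1 - B^2* s^2))
      = complex_of_real (A - B) * (w + complex_of_real (B* s^2))
         / ((1 + complex_of_real B * w) * complex_of_real (1 - B^2* s^2))"
    using nz Dc D Dc' unfolding Gj_def
    by (simp add: field_simps of_real_divide) (simp add: algebra_simps power2_eq_square)
  have n1: "cmod (w + complex_of_real (B* s^2)) = s * cmod (1 + complex_of_real B * w)"
  proof -
    have w2: "Re w ^2 + Im w ^2 = s^2" using w by (simp add: cmod_sq[symmetric])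
    have Y2: "Im w ^2 = s^2 - Re w ^2" using w2 by simp
    have e1: "cmod (w + complex_of_real (B* s^2)) ^2 = (Re w + B* s^2)^2 + Im w ^2" by (simp add: cmod_sq)
    have e2: "cmod (1 + complex_of_real B * w) ^2 = (1 + B*Re w)^2 + B^2 * Im w ^2"
      by (simp add: cmod_sq power_mult_distrib)
    have "cmod (w + complex_of_real (B* s^2)) ^2 = (s * cmod (1 + complex_of_real B * w))^2"
      unfolding e1 power_mult_distrib e2 Y2 by (simp add: power2_eq_square algebra_simps)
    thus ?thesis using s0 by (simp add: power2_eq_iff_nonneg)
  qed
  have cn: "cmod (1 + complex_of_real B * w) \<noteq> 0" using nz by simp
  show ?thesis unfolding id norm_mult norm_divide norm_of_real n1 using cn D
    by (simp add: abs_of_pos field_simps)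
qed



lemma S_jan_Gj: "S_janowski A B = {f \<in> class_A. subordinate (starq f) (Gj A B)}"
  by (simp add: S_janowski_def Gj_def)

lemma Gj_nz:
  assumes "\<bar>B\<bar> \<le> 1" "cmod v < 1"
  shows "1 + complex_of_real B * v \<noteq> 0"
proof
  assume "1 + complex_of_real B * v = 0"
  hence "complex_of_real B * v = -1" by (simp add: add_eq_0_iff)
  hence "cmod (complex_of_real B * v) = 1" by simp
  moreover have "cmod (complex_of_real B * v) < 1"
  proof -
    have "cmod (complex_of_real B * v) = \<bar>B\<bar> * cmod v" by (simp add: norm_mult)
    also have "\<dots> \<le> cmod v" using assms by (simp add: mult_left_le_one_le)
    finally show ?thesis using assms by simp
  qed
  ultimately show False by simp
qed

lemma Gj_holo:
  assumes "\<bar>B\<bar> \<le> 1"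
  shows "Gj A B holomorphic_on unit_disk"
  unfolding Gj_def by (intro holomorphic_intros) (use Gj_nz[OF assms] in \<open>auto simp: disk_iff\<close>)

lemma LB:
  assumes B: "\<bar>B\<bar> \<le> 1" and AB: "B < A" and R1: "R \<le> 1"
    and good: "\<And>s. 0 \<le> s \<Longrightarrow> s < R \<Longrightarrow>
        (A-B)* s/(1-B^2* s^2) < (1-A*B* s^2)/(1-B^2* s^2) - 1/2 \<and>
        (A-B)* s/(1-B^2* s^2) < 5/2 - (1-A*B* s^2)/(1-B^2* s^2)"
    and r: "0 < r" "r \<le> R" and f: "f \<in> S_janowski A B"
  shows "(\<lambda>z. f (complex_of_real r * z) / complex_of_real r) \<in> S_car"
proof -
  from f have fA: "f \<in> class_A" and sub: "subordinate (starq f) (Gj A B)"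
    by (auto simp: S_jan_Gj)
  obtain w where holw: "w holomorphic_on unit_disk" and wD: "w ` unit_disk \<subseteq> unit_disk"
    and w0: "w 0 = 0" and eqw: "\<And>z. z \<in> unit_disk \<Longrightarrow> starq f z = Gj A B (w z)"
    using sub unfolding subordinate_def by blast
  have r1: "r \<le> 1" using r R1 by linarith
  define g where "g = (\<lambda>z. f (complex_of_real r * z) / complex_of_real r)"
  have gA: "g \<in> class_A" and sg: "\<And>z. z \<in> unit_disk \<Longrightarrow> starq g z = starq f (complex_of_real r * z)"
    using scale_class_A[OF fA r(1) r1] unfolding g_def by auto
  have wlt: "cmod (w z) < 1" if "z \<in> unit_disk" for z
  proof -
    have "w z \<in> unit_disk" using wD that by blast
    thus ?thesis by (simp add: disk_iff)
  qed
  define P where "P = (\<lambda>z. Gj A B (w (complex_of_real r * z)))"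
  have hw': "(\<lambda>z. w (complex_of_real r * z)) holomorphic_on unit_disk"
  proof -
    have "(w \<circ> (\<lambda>z. complex_of_real r * z)) holomorphic_on unit_disk"
      by (rule holomorphic_on_compose_gen[OF _ holw])
         (auto intro!: holomorphic_intros scale_in_disk[OF r(1) r1])
    thus ?thesis by (simp add: o_def)
  qed
  have holP: "P holomorphic_on unit_disk"
    unfolding P_def Gj_def
    by (intro holomorphic_intros hw')
       (use Gj_nz[OF B] wlt scale_in_disk[OF r(1) r1] in auto)
  have P0: "P 0 = 1" by (simp add: P_def w0 Gj_def)
  have om: "inOm (P z)" if z: "z \<in> unit_disk" for z
  proof -
    define v where "v = w (complex_of_real r * z)"
    define s where "s = cmod v"
    have rz: "complex_of_real r * z \<in> unit_disk" using scale_in_disk[OF r(1) r1 z] .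
    have s1: "s < 1" using wlt[OF rz] by (simp add: s_def v_def)
    have "s \<le> cmod (complex_of_real r * z)"
      unfolding s_def v_def
      by (rule Schwarz_Lemma(1)[of w]) (use holw w0 wlt rz in \<open>auto simp: unit_disk_def dist_norm\<close>)
    also have "\<dots> = r * cmod z" using r by (simp add: norm_mult)
    also have "\<dots> < r" using r z by (simp add: disk_iff)
    finally have sR: "s < R" using r by linarith
    have s0: "0 \<le> s" by (simp add: s_def)
    define c where "c = (1 - A*B* s^2)/(1 - B^2* s^2)"
    have circ: "cmod (Gj A B v - complex_of_real c) = (A - B) * s / (1 - B^2* s^2)"
      using Gj_circle[OF B s_def[symmetric] s1, of A] AB unfolding c_def by simp
    have g1: "(A - B) * s / (1 - B^2* s^2) < c - 1/2" and g2: "(A - B) * s / (1 - B^2* s^2) < 5/2 - c"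
      using good[OF s0 sR] unfolding c_def by auto
    have i1: "cmod (Gj A B v - complex_of_real c) < c - 1/2" unfolding circ by (rule g1)
    have i2: "cmod (Gj A B v - complex_of_real c) < 5/2 - c" unfolding circ by (rule g2)
    show ?thesis unfolding P_def v_def[symmetric] by (rule disk_inOm[OF i1 i2])
  qed
  have gP: "starq g z = P z" if z: "z \<in> unit_disk" for z
    using sg[OF z] eqw[OF scale_in_disk[OF r(1) r1 z]] by (simp add: P_def)
  have "subordinate (starq g) (\<lambda>z. 1 + z + z\<^sup>2/2)"
    by (rule subord_from_inOm[OF holP P0 om gP])
  thus ?thesis using gA by (simp add: S_car_def g_def)
qed

lemma S_star_sub:
  assumes a0: "0 \<le> \<alpha>" and a1: "\<alpha> < 1"
  shows "S_star_order \<alpha> \<subseteq> S_janowski (1-2*\<alpha>) (-1)"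
proof
  fix f assume "f \<in> S_star_order \<alpha>"
  hence fA: "f \<in> class_A" and re: "\<And>z. z \<in> unit_disk \<Longrightarrow> Re (starq f z) > \<alpha>"
    by (auto simp: S_star_order_def)
  have nz: "f z \<noteq> 0" if "z \<in> unit_disk" "z \<noteq> 0" for z
  proof
    assume "f z = 0"
    hence "starq f z = 0" using that by (simp add: starq_def)
    thus False using re[OF that(1)] a0 by simp
  qed
  have holp: "starq f holomorphic_on unit_disk" by (rule starq_holo[OF fA nz])
  define A where "A = 1 - 2*\<alpha>"
  define w where "w = (\<lambda>z. (starq f z - 1) / (starq f z + complex_of_real A))"
  have den: "starq f z + complex_of_real A \<noteq> 0" if "z \<in> unit_disk" for z
  proof
    assume "starq f z + complex_of_real A = 0"
    hence "Re (starq f z + complex_of_real A) = 0" by simp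
    thus False using re[OF that] a1 by (simp add: A_def)
  qed
  have holw: "w holomorphic_on unit_disk"
    unfolding w_def by (intro holomorphic_intros holp) (use den in auto)
  have w0: "w 0 = 0" by (simp add: w_def starq_def)
  have wlt: "cmod (w z) < 1" if z: "z \<in> unit_disk" for z
  proof -
    define x where "x = Re (starq f z)"
    define y where "y = Im (starq f z)"
    have e1: "cmod (starq f z - 1) ^2 = (x-1)^2 + y^2" by (simp add: cmod_sq x_def y_def)
    have e2: "cmod (starq f z + complex_of_real A) ^2 = (x+A)^2 + y^2" by (simp add: cmod_sq x_def y_def)
    have "0 < (2-2*\<alpha>)*(2*x-2*\<alpha>)" using re[OF z] a1 by (intro mult_pos_pos) (auto simp: x_def)
    hence "(x-1)^2 + y^2 < (x+A)^2 + y^2" by (simp add: A_def power2_eq_square algebra_simps)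
    hence "cmod (starq f z - 1) ^2 < cmod (starq f z + complex_of_real A) ^2"
      by (simp only: e1 e2)
    hence "cmod (starq f z - 1) < cmod (starq f z + complex_of_real A)"
      using power_less_imp_less_base by fastforce
    thus ?thesis using den[OF z] by (simp add: w_def norm_divide)
  qed
  have eq: "starq f z = Gj A (-1) (w z)" if z: "z \<in> unit_disk" for z
  proof -
    have d: "starq f z + complex_of_real A \<noteq> 0" using den[OF z] .
    have d2: "1 + complex_of_real A \<noteq> 0"
    proof -
      have "1 + A \<noteq> 0" using a1 by (simp add: A_def)
      hence "complex_of_real (1 + A) \<noteq> 0" by (metis of_real_eq_0_iff)
      thus ?thesis by simp
    qed
    have n1: "1 + complex_of_real (-1) * w z = (1 + complex_of_real A) / (starq f z + complex_of_real A)"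
      using d by (simp add: w_def field_simps)
    have n2: "1 + complex_of_real A * w z = starq f z * (1 + complex_of_real A) / (starq f z + complex_of_real A)"
      using d by (simp add: w_def field_simps)
    have q: "(1 + complex_of_real A) / (starq f z + complex_of_real A) \<noteq> 0" using d d2 by simp
    have "Gj A (-1) (w z) = (starq f z * ((1 + complex_of_real A) / (starq f z + complex_of_real A)))
        / ((1 + complex_of_real A) / (starq f z + complex_of_real A))"
      unfolding Gj_def n1 n2 by simp
    also have "\<dots> = starq f z" using q by (rule nonzero_mult_div_cancel_right)
    finally show ?thesis by simp
  qed
  have "subordinate (starq f) (Gj A (-1))"
    unfolding subordinate_def
    by (intro exI[of _ w] conjI holw w0 ballI eq) (use wlt in \<open>auto simp: disk_iff\<close>)
  thus "f \<in> S_janowski (1-2*\<alpha>) (-1)" using fA by (simp add: S_jan_Gj A_def)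
qed

lemma UB:
  assumes fA: "f \<in> class_A" and r: "0 < r" "r \<le> 1"
    and S: "(\<lambda>z. f (complex_of_real r * z) / complex_of_real r) \<in> S_car"
    and x: "\<bar>x\<bar> < r"
  shows "inOm (starq f (complex_of_real x))"
proof -
  define g where "g = (\<lambda>z. f (complex_of_real r * z) / complex_of_real r)"
  define \<zeta> where "\<zeta> = complex_of_real (x / r)"
  have "\<bar>x / r\<bar> < 1" using x r by (simp add: abs_divide divide_less_eq)
  hence zD: "\<zeta> \<in> unit_disk" unfolding disk_iff \<zeta>_def by (simp only: norm_of_real)
  have "starq g \<zeta> = starq f (complex_of_real r * \<zeta>)"
    using scale_class_A(2)[OF fA r(1) r(2) zD] unfolding g_def .
  also have "complex_of_real r * \<zeta> = complex_of_real x" using r by (simp add: \<zeta>_def)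
  finally have e: "starq g \<zeta> = starq f (complex_of_real x)" .
  from S obtain w where wD: "w ` unit_disk \<subseteq> unit_disk"
      and eqw: "\<And>z. z \<in> unit_disk \<Longrightarrow> starq g z = 1 + w z + (w z)\<^sup>2/2"
    unfolding S_car_def subordinate_def g_def by blast
  have "w \<zeta> \<in> unit_disk" using wD zD by blast
  hence "cmod (w \<zeta>) < 1" by (simp add: disk_iff)
  hence "inOm (1 + w \<zeta> + (w \<zeta>)\<^sup>2/2)" by (rule phi_inOm)
  thus ?thesis using eqw[OF zD] e by simp
qed

lemma radius_eq:
  assumes R: "0 < R" "R \<le> 1"
    and lb: "\<And>r f. 0 < r \<Longrightarrow> r \<le> R \<Longrightarrow> f \<in> F \<Longrightarrow>
              (\<lambda>z. f (complex_of_real r * z) / complex_of_real r) \<in> S_car"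
    and ub: "\<And>r. R < r \<Longrightarrow> r \<le> 1 \<Longrightarrow>
              \<exists>f\<in>F. (\<lambda>z. f (complex_of_real r * z) / complex_of_real r) \<notin> S_car"
  shows "car_radius F = R"
proof -
  have "{r. 0 < r \<and> r \<le> 1 \<and> (\<forall>f\<in>F. (\<lambda>z. f (of_real r * z) / of_real r) \<in> S_car)} = {0<..R}"
  proof (intro set_eqI iffI)
    fix r assume "r \<in> {r. 0 < r \<and> r \<le> 1 \<and> (\<forall>f\<in>F. (\<lambda>z. f (of_real r * z) / of_real r) \<in> S_car)}"
    hence h: "0 < r" "r \<le> 1" "\<forall>f\<in>F. (\<lambda>z. f (of_real r * z) / of_real r) \<in> S_car" by auto
    have "r \<le> R"
    proof (rule ccontr)
      assume "\<not> r \<le> R"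
      then obtain f where "f \<in> F" "(\<lambda>z. f (complex_of_real r * z) / complex_of_real r) \<notin> S_car"
        using ub h(2) by force
      thus False using h(3) by blast
    qed
    thus "r \<in> {0<..R}" using h by simp
  next
    fix r assume "r \<in> {0<..R}"
    thus "r \<in> {r. 0 < r \<and> r \<le> 1 \<and> (\<forall>f\<in>F. (\<lambda>z. f (of_real r * z) / of_real r) \<in> S_car)}"
      using lb R by auto
  qed
  thus ?thesis unfolding car_radius_def using R by simp
qed

lemma sharp_gen:
  assumes fA: "f \<in> class_A" and fF: "f \<in> F" and R: "0 < R"
    and eqG: "\<And>z. z \<in> unit_disk \<Longrightarrow> starq f z = G z"
    and pt: "\<And>r. R < r \<Longrightarrow> r \<le> 1 \<Longrightarrow> \<exists>x. \<bar>x\<bar> < r \<and> \<not> inOm (G (complex_of_real x))"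
    and r: "R < r" "r \<le> 1"
  shows "\<exists>f\<in>F. (\<lambda>z. f (complex_of_real r * z) / complex_of_real r) \<notin> S_car"
proof -
  obtain x where x: "\<bar>x\<bar> < r" "\<not> inOm (G (complex_of_real x))" using pt[OF r] by blast
  have xD: "complex_of_real x \<in> unit_disk" using x r by (simp add: disk_iff)
  have "(\<lambda>z. f (complex_of_real r * z) / complex_of_real r) \<notin> S_car"
  proof
    assume "(\<lambda>z. f (complex_of_real r * z) / complex_of_real r) \<in> S_car"
    from UB[OF fA _ r(2) this x(1)] R r have "inOm (starq f (complex_of_real x))" by simp
    thus False using x(2) eqG[OF xD] by simp
  qed
  thus ?thesis using fF by blast
qed

lemma jan_sharp_fun:
  assumes B: "\<bar>B\<bar> \<le> 1"
  shows "\<exists>f\<in>S_janowski A B. f \<in> class_A \<and> (\<forall>z\<in>unit_disk. starq f z = Gj A B z)"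
proof -
  have "Gj A B 0 = 1" by (simp add: Gj_def)
  then obtain f where fA: "f \<in> class_A" and eq: "\<forall>z\<in>unit_disk. starq f z = Gj A B z"
    using exists_with_starq[OF Gj_holo[OF B]] by blast
  have "subordinate (starq f) (Gj A B)"
    unfolding subordinate_def
    by (intro exI[of _ "\<lambda>z. z"]) (use eq in auto)
  thus ?thesis using fA eq by (auto simp: S_jan_Gj)
qed

lemma Re_ofr_mult: "Re (complex_of_real c * u) = c * Re u"
  by (simp add: scaleR_conv_of_real[symmetric])

lemma Re_inv_1m:
  assumes "cmod z < 1"
  shows "Re (1 / (1 - z)) > 1/2"
proof -
  define x where "x = Re z"
  define y where "y = Im z"
  have xy: "x^2 + y^2 < 1" using assms by (simp add: cmod_def x_def y_def)
  have x1: "x < 1"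
  proof -
    have "y^2 \<ge> 0" by simp
    hence "x^2 < 1" using xy by linarith
    hence "\<bar>x\<bar> < 1" by (simp add: abs_square_less_1)
    thus ?thesis by simp
  qed
  have e: "Re (1 / (1 - z)) = (1 - x) / ((1 - x)^2 + y^2)"
    by (simp add: Re_divide x_def y_def)
  have pos: "(1 - x)^2 + y^2 > 0" using x1 by (simp add: add_pos_nonneg)
  have "(1 - x)^2 + y^2 < 2 * (1 - x)" using xy by (simp add: power2_eq_square algebra_simps)
  thus ?thesis unfolding e using pos by (simp add: field_simps)
qed

lemma star_sharp_fun:
  assumes a0: "0 \<le> \<alpha>" and a1: "\<alpha> < 1"
  shows "\<exists>f\<in>S_star_order \<alpha>. f \<in> class_A \<and> (\<forall>z\<in>unit_disk. starq f z = Gj (1-2*\<alpha>) (-1) z)"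
proof -
  define A where "A = 1 - 2*\<alpha>"
  have "Gj A (-1) 0 = 1" by (simp add: Gj_def)
  then obtain f where fA: "f \<in> class_A" and eq: "\<forall>z\<in>unit_disk. starq f z = Gj A (-1) z"
    using exists_with_starq[OF Gj_holo[of "-1" A]] by auto
  have "Re (Gj A (-1) z) > \<alpha>" if z: "z \<in> unit_disk" for z
  proof -
    have z1: "cmod z < 1" using z by (simp add: disk_iff)
    have nz: "1 - z \<noteq> 0" using z1 by auto
    define u where "u = 1 / (1 - z)"
    have "Gj A (-1) z = - complex_of_real A + complex_of_real (1 + A) * u"
      unfolding Gj_def u_def using nz by (simp add: field_simps)
    hence "Re (Gj A (-1) z) = - A + (1 + A) * Re u" by (simp add: Re_ofr_mult)
    hence "Re (Gj A (-1) z) = - A + (1 + A) * Re (1 / (1 - z))" by (simp add: u_def)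
    moreover have "(1 + A) * Re (1 / (1 - z)) > (1 + A) * (1/2)"
      using Re_inv_1m[OF z1] a1 by (intro mult_strict_left_mono) (auto simp: A_def)
    ultimately show ?thesis by (simp add: A_def)
  qed
  hence "f \<in> S_star_order \<alpha>" using fA eq by (simp add: S_star_order_def)
  thus ?thesis using fA eq by (auto simp: A_def)
qed

lemma good_intro:
  fixes A B s :: real
  assumes D: "1 - B^2* s^2 > 0"
    and p1: "2*(A-B)* s < 2*(1-A*B* s^2) - (1 - B^2* s^2)"
    and p2: "2*(A-B)* s < 5*(1-B^2* s^2) - 2*(1-A*B* s^2)"
  shows "(A-B)* s/(1-B^2* s^2) < (1-A*B* s^2)/(1-B^2* s^2) - 1/2 \<and>
        (A-B)* s/(1-B^2* s^2) < 5/2 - (1-A*B* s^2)/(1-B^2* s^2)"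
proof -
  have gi: "X/D < Y/D - 1/2 \<and> X/D < 5/2 - Y/D" if "D > 0" "2*X < 2*Y - D" "2*X < 5*D - 2*Y"
    for X Y D :: real using that by (simp add: field_simps)
  show ?thesis by (rule gi) (use D p1 p2 in \<open>simp_all add: algebra_simps\<close>)
qed



lemma good_intro2:
  fixes A B s P1 P2 :: real
  assumes D: "1 - B^2* s^2 > 0" and P1: "0 < P1" and P2: "0 < P2"
    and e1: "2*(1-A*B* s^2) - (1 - B^2* s^2) - 2*(A-B)* s = P1"
    and e2: "5*(1-B^2* s^2) - 2*(1-A*B* s^2) - 2*(A-B)* s = P2"
  shows "(A-B)* s/(1-B^2* s^2) < (1-A*B* s^2)/(1-B^2* s^2) - 1/2 \<and>
        (A-B)* s/(1-B^2* s^2) < 5/2 - (1-A*B* s^2)/(1-B^2* s^2)"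
  by (rule good_intro[OF D]) (use P1 P2 e1 e2 in linarith)+

lemma not_inOm_Gj:
  assumes "1 + B*x \<noteq> 0" "(1 + A*x)/(1 + B*x) \<le> 1/2 \<or> (1 + A*x)/(1 + B*x) \<ge> 5/2"
  shows "\<not> inOm (Gj A B (complex_of_real x))"
  unfolding Gj_real[OF assms(1)] by (rule not_inOm_real[OF assms(2)])

lemma jan_radius:
  assumes B: "\<bar>B\<bar> \<le> 1" and AB: "B < A" and R: "0 < R" "R \<le> 1"
    and good: "\<And>s. 0 \<le> s \<Longrightarrow> s < R \<Longrightarrow>
        (A-B)* s/(1-B^2* s^2) < (1-A*B* s^2)/(1-B^2* s^2) - 1/2 \<and>
        (A-B)* s/(1-B^2* s^2) < 5/2 - (1-A*B* s^2)/(1-B^2* s^2)"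
    and F: "F \<subseteq> S_janowski A B"
    and sharp: "\<exists>f\<in>F. f \<in> class_A \<and> (\<forall>z\<in>unit_disk. starq f z = Gj A B z)"
    and pt: "\<And>r. R < r \<Longrightarrow> r \<le> 1 \<Longrightarrow> \<exists>x. \<bar>x\<bar> < r \<and> \<not> inOm (Gj A B (complex_of_real x))"
  shows "car_radius F = R"
proof (rule radius_eq[OF R])
  fix r f assume "0 < r" "r \<le> R" "f \<in> F"
  thus "(\<lambda>z. f (complex_of_real r * z) / complex_of_real r) \<in> S_car"
    using LB[OF B AB R(2) good] F by blast
next
  fix r assume r: "R < r" "r \<le> 1"
  from sharp obtain f where "f \<in> F" "f \<in> class_A" "\<forall>z\<in>unit_disk. starq f z = Gj A B z" by blast
  thus "\<exists>f\<in>F. (\<lambda>z. f (complex_of_real r * z) / complex_of_real r) \<notin> S_car"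
    using sharp_gen[OF _ _ R(1) _ pt r] by blast
qed

lemma class_i_good:
  fixes \<alpha> s :: real
  assumes a: "0 \<le> \<alpha>" "\<alpha> < 1" and s: "0 \<le> s" "s < 1" and h1: "(3-4*\<alpha>)* s < 1" and h2: "(7-4*\<alpha>)* s < 3"
  defines "A \<equiv> 1 - 2*\<alpha>" and "B \<equiv> -1"
  shows "(A-B)* s/(1-B^2* s^2) < (1-A*B* s^2)/(1-B^2* s^2) - 1/2 \<and>
        (A-B)* s/(1-B^2* s^2) < 5/2 - (1-A*B* s^2)/(1-B^2* s^2)"
proof (rule good_intro2)
  show "1 - B^2* s^2 > 0" using s by (simp add: B_def abs_square_less_1)
  show "0 < (1-s)*(1-(3-4*\<alpha>)* s)" using s h1 by (intro mult_pos_pos) auto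
  show "0 < (1+s)*(3-(7-4*\<alpha>)* s)" using s h2 by (intro mult_pos_pos) auto
  show "2*(1-A*B* s^2) - (1 - B^2* s^2) - 2*(A-B)* s = (1-s)*(1-(3-4*\<alpha>)* s)"
    by (simp add: A_def B_def power2_eq_square algebra_simps)
  show "5*(1-B^2* s^2) - 2*(1-A*B* s^2) - 2*(A-B)* s = (1+s)*(3-(7-4*\<alpha>)* s)"
    by (simp add: A_def B_def power2_eq_square algebra_simps)
qed

lemma part_i1:
  assumes a: "0 \<le> \<alpha>" "\<alpha> \<le> 1/4"
  shows "car_radius (S_star_order \<alpha>) = 1 / (3 - 4*\<alpha>)"
proof -
  define R where "R = 1 / (3 - 4*\<alpha>)"
  have k: "3 - 4*\<alpha> \<ge> 2" using a by simp
  have R0: "0 < R" using k by (simp add: R_def)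
  have R2: "R \<le> 1/2" using k by (simp add: R_def field_simps)
  have "car_radius (S_star_order \<alpha>) = R"
  proof (rule jan_radius[of "-1" "1-2*\<alpha>"])
    show "\<bar>-1::real\<bar> \<le> 1" by simp
    show "-1 < 1-2*\<alpha>" using a by simp
    show "0 < R" "R \<le> 1" using R0 R2 by auto
    show "S_star_order \<alpha> \<subseteq> S_janowski (1-2*\<alpha>) (-1)" using S_star_sub a by simp
    show "\<exists>f\<in>S_star_order \<alpha>. f \<in> class_A \<and> (\<forall>z\<in>unit_disk. starq f z = Gj (1-2*\<alpha>) (-1) z)"
      using star_sharp_fun a by simp
  next
    fix s :: real assume s: "0 \<le> s" "s < R"
    have h1: "(3-4*\<alpha>)* s < 1" using s k by (simp add: R_def field_simps)
    have "(4*\<alpha>)* s \<le> 1* s" using s a by (intro mult_right_mono) auto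
    hence "(7-4*\<alpha>)* s \<le> 3*((3-4*\<alpha>)* s)" by (simp add: algebra_simps)
    hence h2: "(7-4*\<alpha>)* s < 3" using h1 by linarith
    show "((1-2*\<alpha>)-(-1))* s/(1-(-1)^2* s^2) < (1-(1-2*\<alpha>)*(-1)* s^2)/(1-(-1)^2* s^2) - 1/2 \<and>
        ((1-2*\<alpha>)-(-1))* s/(1-(-1)^2* s^2) < 5/2 - (1-(1-2*\<alpha>)*(-1)* s^2)/(1-(-1)^2* s^2)"
      using class_i_good[OF _ _ s(1) _ h1 h2] a s R2 by simp
  next
    fix r assume r: "R < r" "r \<le> 1"
    define s where "s = (R + r)/2"
    have sR: "R < s" "s < r" using r by (auto simp: s_def)
    have h: "(3-4*\<alpha>)* s > 1" using sR k by (simp add: R_def field_simps)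
    have "1 + (-1)*(-s) \<noteq> (0::real)" using sR R0 by simp
    moreover have "(1 + (1-2*\<alpha>)*(-s))/(1 + (-1)*(-s)) \<le> 1/2"
      using h sR R0 by (simp add: field_simps)
    ultimately have "\<not> inOm (Gj (1-2*\<alpha>) (-1) (complex_of_real (-s)))"
      by (intro not_inOm_Gj) auto
    moreover have "\<bar>-s\<bar> < r" using sR R0 by simp
    ultimately show "\<exists>x. \<bar>x\<bar> < r \<and> \<not> inOm (Gj (1-2*\<alpha>) (-1) (complex_of_real x))" by blast
  qed
  thus ?thesis by (simp add: R_def)
qed

lemma part_i2:
  assumes a: "1/4 < \<alpha>" "\<alpha> < 1"
  shows "car_radius (S_star_order \<alpha>) = 3 / (7 - 4*\<alpha>)"
proof -
  define R where "R = 3 / (7 - 4*\<alpha>)"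
  have k: "7 - 4*\<alpha> > 3" using a by simp
  have R0: "0 < R" using k by (simp add: R_def)
  have R1: "R < 1" using k by (simp add: R_def field_simps)
  have "car_radius (S_star_order \<alpha>) = R"
  proof (rule jan_radius[of "-1" "1-2*\<alpha>"])
    show "\<bar>-1::real\<bar> \<le> 1" by simp
    show "-1 < 1-2*\<alpha>" using a by simp
    show "0 < R" "R \<le> 1" using R0 R1 by auto
    show "S_star_order \<alpha> \<subseteq> S_janowski (1-2*\<alpha>) (-1)" using S_star_sub a by simp
    show "\<exists>f\<in>S_star_order \<alpha>. f \<in> class_A \<and> (\<forall>z\<in>unit_disk. starq f z = Gj (1-2*\<alpha>) (-1) z)"
      using star_sharp_fun a by simp
  next
    fix s :: real assume s: "0 \<le> s" "s < R"
    have h2: "(7-4*\<alpha>)* s < 3" using s k by (simp add: R_def field_simps)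
    have "0 \<le> (8*\<alpha> - 2)* s" using s a by (intro mult_nonneg_nonneg) auto
    hence "3*((3-4*\<alpha>)* s) \<le> (7-4*\<alpha>)* s" by (simp add: algebra_simps)
    hence h1: "(3-4*\<alpha>)* s < 1" using h2 by linarith
    show "((1-2*\<alpha>)-(-1))* s/(1-(-1)^2* s^2) < (1-(1-2*\<alpha>)*(-1)* s^2)/(1-(-1)^2* s^2) - 1/2 \<and>
        ((1-2*\<alpha>)-(-1))* s/(1-(-1)^2* s^2) < 5/2 - (1-(1-2*\<alpha>)*(-1)* s^2)/(1-(-1)^2* s^2)"
      using class_i_good[OF _ _ s(1) _ h1 h2] a s R1 by simp
  next
    fix r assume r: "R < r" "r \<le> 1"
    define s where "s = (R + r)/2"
    have sR: "R < s" "s < r" using r by (auto simp: s_def)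
    have h: "(7-4*\<alpha>)* s > 3" using sR k by (simp add: R_def field_simps)
    have s1: "s < 1" using sR r by simp
    have "1 + (-1)* s \<noteq> (0::real)" using s1 by simp
    moreover have "(1 + (1-2*\<alpha>)* s)/(1 + (-1)* s) \<ge> 5/2"
      using h s1 by (simp add: field_simps)
    ultimately have "\<not> inOm (Gj (1-2*\<alpha>) (-1) (complex_of_real s))"
      by (intro not_inOm_Gj) auto
    moreover have "\<bar>s\<bar> < r" using sR R0 by simp
    ultimately show "\<exists>x. \<bar>x\<bar> < r \<and> \<not> inOm (Gj (1-2*\<alpha>) (-1) (complex_of_real x))" by blast
  qed
  thus ?thesis by (simp add: R_def)
qed

lemma class_ii_good:
  fixes \<alpha> s :: real
  assumes h: "2*(1-\<alpha>)* s < 1"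
  shows "((1-\<alpha>)-0)* s/(1-0^2* s^2) < (1-(1-\<alpha>)*0* s^2)/(1-0^2* s^2) - 1/2 \<and>
        ((1-\<alpha>)-0)* s/(1-0^2* s^2) < 5/2 - (1-(1-\<alpha>)*0* s^2)/(1-0^2* s^2)"
  by (rule good_intro2[of 0 s "1 - 2*(1-\<alpha>)* s" "3 - 2*(1-\<alpha>)* s" "1-\<alpha>"])
     (use h in \<open>simp_all add: algebra_simps\<close>)

lemma part_ii1:
  assumes a: "0 < \<alpha>" "\<alpha> < 1/2"
  shows "car_radius (S_janowski (1 - \<alpha>) 0) = 1 / (2 * (1 - \<alpha>))"
proof (rule jan_radius[of 0 "1-\<alpha>"])
  define R where "R = 1 / (2 * (1 - \<alpha>))"
  have k: "2*(1-\<alpha>) > 1" using a by simp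
  show "\<bar>0::real\<bar> \<le> 1" by simp
  show "0 < 1-\<alpha>" using a by simp
  show "0 < 1 / (2 * (1 - \<alpha>))" using a by simp
  show "1 / (2 * (1 - \<alpha>)) \<le> 1" using k by (simp add: field_simps)
  show "S_janowski (1 - \<alpha>) 0 \<subseteq> S_janowski (1 - \<alpha>) 0" by simp
  show "\<exists>f\<in>S_janowski (1 - \<alpha>) 0. f \<in> class_A \<and> (\<forall>z\<in>unit_disk. starq f z = Gj (1-\<alpha>) 0 z)"
    using jan_sharp_fun[of 0 "1-\<alpha>"] by simp
next
  fix s :: real assume s: "0 \<le> s" "s < 1 / (2 * (1 - \<alpha>))"
  have "2*(1-\<alpha>)* s < 1" using s a by (simp add: field_simps)
  thus "((1-\<alpha>)-0)* s/(1-0^2* s^2) < (1-(1-\<alpha>)*0* s^2)/(1-0^2* s^2) - 1/2 \<and>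
        ((1-\<alpha>)-0)* s/(1-0^2* s^2) < 5/2 - (1-(1-\<alpha>)*0* s^2)/(1-0^2* s^2)"
    by (rule class_ii_good)
next
  fix r assume r: "1 / (2 * (1 - \<alpha>)) < r" "r \<le> 1"
  define s where "s = (1 / (2 * (1 - \<alpha>)) + r)/2"
  have sR: "1 / (2 * (1 - \<alpha>)) < s" "s < r" using r by (auto simp: s_def)
  have h: "2*(1-\<alpha>)* s > 1" using sR a by (simp add: field_simps)
  have "0 < 1 / (2 * (1 - \<alpha>))" using a by simp
  hence s0: "s > 0" using sR(1) by linarith
  have "1 + 0*(-s) \<noteq> (0::real)" by simp
  moreover have "(1 + (1-\<alpha>)*(-s))/(1 + 0*(-s)) \<le> 1/2" using h by (simp add: algebra_simps)
  ultimately have "\<not> inOm (Gj (1-\<alpha>) 0 (complex_of_real (-s)))"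
    by (intro not_inOm_Gj) auto
  moreover have "\<bar>-s\<bar> < r" using sR s0 by simp
  ultimately show "\<exists>x. \<bar>x\<bar> < r \<and> \<not> inOm (Gj (1-\<alpha>) 0 (complex_of_real x))" by blast
qed

lemma part_ii2:
  assumes a: "1/2 \<le> \<alpha>" "\<alpha> < 1"
  shows "car_radius (S_janowski (1 - \<alpha>) 0) = 1"
proof (rule jan_radius[of 0 "1-\<alpha>"])
  show "\<bar>0::real\<bar> \<le> 1" by simp
  show "0 < 1-\<alpha>" using a by simp
  show "(0::real) < 1" "(1::real) \<le> 1" by simp_all
  show "S_janowski (1 - \<alpha>) 0 \<subseteq> S_janowski (1 - \<alpha>) 0" by simp
  show "\<exists>f\<in>S_janowski (1 - \<alpha>) 0. f \<in> class_A \<and> (\<forall>z\<in>unit_disk. starq f z = Gj (1-\<alpha>) 0 z)"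
    using jan_sharp_fun[of 0 "1-\<alpha>"] by simp
next
  fix s :: real assume s: "0 \<le> s" "s < 1"
  have "(2*(1-\<alpha>))* s \<le> 1* s" using s a by (intro mult_right_mono) auto
  hence "2*(1-\<alpha>)* s < 1" using s by simp
  thus "((1-\<alpha>)-0)* s/(1-0^2* s^2) < (1-(1-\<alpha>)*0* s^2)/(1-0^2* s^2) - 1/2 \<and>
        ((1-\<alpha>)-0)* s/(1-0^2* s^2) < 5/2 - (1-(1-\<alpha>)*0* s^2)/(1-0^2* s^2)"
    by (rule class_ii_good)
next
  fix r :: real assume "1 < r" "r \<le> 1"
  thus "\<exists>x. \<bar>x\<bar> < r \<and> \<not> inOm (Gj (1-\<alpha>) 0 (complex_of_real x))" by simp
qed

lemma class_iii_good:
  fixes \<alpha> s :: real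
  assumes a: "0 < \<alpha>" and s: "0 \<le> s" and h: "3*(\<alpha>* s) < 1"
  shows "(\<alpha>-(-\<alpha>))* s/(1-(-\<alpha>)^2* s^2) < (1-\<alpha>*(-\<alpha>)* s^2)/(1-(-\<alpha>)^2* s^2) - 1/2 \<and>
        (\<alpha>-(-\<alpha>))* s/(1-(-\<alpha>)^2* s^2) < 5/2 - (1-\<alpha>*(-\<alpha>)* s^2)/(1-(-\<alpha>)^2* s^2)"
proof (rule good_intro2)
  have t0: "0 \<le> \<alpha>* s" using a s by simp
  have t1: "\<alpha>* s < 1" using h t0 by linarith
  have "(\<alpha>* s)^2 < 1" using t0 t1 by (simp add: abs_square_less_1)
  thus "1 - (-\<alpha>)^2* s^2 > 0" by (simp add: power_mult_distrib)
  show "0 < (1-\<alpha>* s)*(1-3*(\<alpha>* s))" using t1 h by (intro mult_pos_pos) auto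
  show "0 < (1+\<alpha>* s)*(3-7*(\<alpha>* s))" using t0 h by (intro mult_pos_pos) auto
  show "2*(1-\<alpha>*(-\<alpha>)* s^2) - (1 - (-\<alpha>)^2* s^2) - 2*(\<alpha>-(-\<alpha>))* s = (1-\<alpha>* s)*(1-3*(\<alpha>* s))"
    by (simp add: power2_eq_square algebra_simps)
  show "5*(1-(-\<alpha>)^2* s^2) - 2*(1-\<alpha>*(-\<alpha>)* s^2) - 2*(\<alpha>-(-\<alpha>))* s = (1+\<alpha>* s)*(3-7*(\<alpha>* s))"
    by (simp add: power2_eq_square algebra_simps)
qed

lemma part_iii1:
  assumes a: "0 < \<alpha>" "\<alpha> \<le> 1/3"
  shows "car_radius (S_janowski \<alpha> (-\<alpha>)) = 1"
proof (rule jan_radius[of "-\<alpha>" \<alpha>])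
  show "\<bar>-\<alpha>\<bar> \<le> 1" using a by simp
  show "-\<alpha> < \<alpha>" using a by simp
  show "(0::real) < 1" "(1::real) \<le> 1" by simp_all
  show "S_janowski \<alpha> (-\<alpha>) \<subseteq> S_janowski \<alpha> (-\<alpha>)" by simp
  show "\<exists>f\<in>S_janowski \<alpha> (-\<alpha>). f \<in> class_A \<and> (\<forall>z\<in>unit_disk. starq f z = Gj \<alpha> (-\<alpha>) z)"
    using jan_sharp_fun[of "-\<alpha>" \<alpha>] a by simp
next
  fix s :: real assume s: "0 \<le> s" "s < 1"
  have "(3*\<alpha>)* s \<le> 1* s" using s a by (intro mult_right_mono) auto
  hence "3*(\<alpha>* s) < 1" using s by simp
  thus "(\<alpha>-(-\<alpha>))* s/(1-(-\<alpha>)^2* s^2) < (1-\<alpha>*(-\<alpha>)* s^2)/(1-(-\<alpha>)^2* s^2) - 1/2 \<and>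
        (\<alpha>-(-\<alpha>))* s/(1-(-\<alpha>)^2* s^2) < 5/2 - (1-\<alpha>*(-\<alpha>)* s^2)/(1-(-\<alpha>)^2* s^2)"
    by (rule class_iii_good[OF a(1) s(1)])
next
  fix r :: real assume "1 < r" "r \<le> 1"
  thus "\<exists>x. \<bar>x\<bar> < r \<and> \<not> inOm (Gj \<alpha> (-\<alpha>) (complex_of_real x))" by simp
qed

lemma part_iii2:
  assumes a: "1/3 < \<alpha>" "\<alpha> \<le> 1"
  shows "car_radius (S_janowski \<alpha> (-\<alpha>)) = 1 / (3 * \<alpha>)"
proof (rule jan_radius[of "-\<alpha>" \<alpha>])
  show "\<bar>-\<alpha>\<bar> \<le> 1" using a by simp
  show "-\<alpha> < \<alpha>" using a by simp
  show "0 < 1 / (3 * \<alpha>)" using a by simp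
  show "1 / (3 * \<alpha>) \<le> 1" using a by (simp add: field_simps)
  show "S_janowski \<alpha> (-\<alpha>) \<subseteq> S_janowski \<alpha> (-\<alpha>)" by simp
  show "\<exists>f\<in>S_janowski \<alpha> (-\<alpha>). f \<in> class_A \<and> (\<forall>z\<in>unit_disk. starq f z = Gj \<alpha> (-\<alpha>) z)"
    using jan_sharp_fun[of "-\<alpha>" \<alpha>] a by simp
next
  fix s :: real assume s: "0 \<le> s" "s < 1 / (3 * \<alpha>)"
  have "3*(\<alpha>* s) < 1" using s a by (simp add: field_simps)
  thus "(\<alpha>-(-\<alpha>))* s/(1-(-\<alpha>)^2* s^2) < (1-\<alpha>*(-\<alpha>)* s^2)/(1-(-\<alpha>)^2* s^2) - 1/2 \<and>
        (\<alpha>-(-\<alpha>))* s/(1-(-\<alpha>)^2* s^2) < 5/2 - (1-\<alpha>*(-\<alpha>)* s^2)/(1-(-\<alpha>)^2* s^2)"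
    using class_iii_good[OF _ s(1)] a by simp
next
  fix r assume r: "1 / (3 * \<alpha>) < r" "r \<le> 1"
  define s where "s = (1 / (3 * \<alpha>) + r)/2"
  have sR: "1 / (3 * \<alpha>) < s" "s < r" using r by (auto simp: s_def)
  have h: "3*(\<alpha>* s) > 1" using sR a by (simp add: field_simps)
  have "0 < 1 / (3 * \<alpha>)" using a by simp
  hence s0: "s > 0" using sR(1) by linarith
  have "0 < \<alpha> * s" using s0 a by simp
  hence d: "1 + (-\<alpha>)*(-s) > 0" by simp
  hence "1 + (-\<alpha>)*(-s) \<noteq> 0" by simp
  moreover have "(1 + \<alpha>*(-s))/(1 + (-\<alpha>)*(-s)) \<le> 1/2" using h d by (simp add: field_simps)
  ultimately have "\<not> inOm (Gj \<alpha> (-\<alpha>) (complex_of_real (-s)))"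
    by (intro not_inOm_Gj) auto
  moreover have "\<bar>-s\<bar> < r" using sR s0 by simp
  ultimately show "\<exists>x. \<bar>x\<bar> < r \<and> \<not> inOm (Gj \<alpha> (-\<alpha>) (complex_of_real x))" by blast
qed

lemma part_ivB:
  assumes B: "-1 < B" "B < 1"
  shows "car_radius (S_janowski 1 B) = 1 / (2 - B)"
proof (rule jan_radius[of B 1])
  have k: "2 - B > 1" using B by simp
  show "\<bar>B\<bar> \<le> 1" using B by simp
  show "B < 1" using B by simp
  show "0 < 1 / (2 - B)" using k by simp
  show "1 / (2 - B) \<le> 1" using k by (simp add: field_simps)
  show "S_janowski 1 B \<subseteq> S_janowski 1 B" by simp
  show "\<exists>f\<in>S_janowski 1 B. f \<in> class_A \<and> (\<forall>z\<in>unit_disk. starq f z = Gj 1 B z)"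
    using jan_sharp_fun[of B 1] B by simp
next
  have k: "2 - B > 1" using B by simp
  fix s :: real assume s: "0 \<le> s" "s < 1 / (2 - B)"
  have h: "(2-B)* s < 1" using s k by (simp add: field_simps)
  have s1: "s < 1"
  proof -
    have "1* s \<le> (2-B)* s" using s k by (intro mult_right_mono) auto
    thus ?thesis using h by simp
  qed
  have Bs: "\<bar>B* s\<bar> < 1"
  proof -
    have "\<bar>B* s\<bar> = \<bar>B\<bar> * s" using s by (simp add: abs_mult)
    also have "\<dots> \<le> s" using s B by (simp add: mult_left_le_one_le)
    finally show ?thesis using s1 by simp
  qed
  show "(1-B)* s/(1-B^2* s^2) < (1-1*B* s^2)/(1-B^2* s^2) - 1/2 \<and>
        (1-B)* s/(1-B^2* s^2) < 5/2 - (1-1*B* s^2)/(1-B^2* s^2)"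
  proof (rule good_intro2)
    have "(B* s)^2 < 1" using Bs by (simp add: abs_square_less_1)
    thus "1 - B^2* s^2 > 0" by (simp add: power_mult_distrib)
    show "0 < (1+B* s)*(1-(2-B)* s)" using Bs h by (intro mult_pos_pos) (auto simp: abs_less_iff)
    have "0 \<le> (4 + 2*B)* s" using B s by (intro mult_nonneg_nonneg) auto
    hence "(2-5*B)* s \<le> 3*((2-B)* s)" by (simp add: algebra_simps)
    hence "(2-5*B)* s < 3" using h by linarith
    thus "0 < (1-B* s)*(3-(2-5*B)* s)" using Bs by (intro mult_pos_pos) (auto simp: abs_less_iff)
    show "2*(1-1*B* s^2) - (1 - B^2* s^2) - 2*(1-B)* s = (1+B* s)*(1-(2-B)* s)"
      by (simp add: power2_eq_square algebra_simps)
    show "5*(1-B^2* s^2) - 2*(1-1*B* s^2) - 2*(1-B)* s = (1-B* s)*(3-(2-5*B)* s)"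
      by (simp add: power2_eq_square algebra_simps)
  qed
next
  have k: "2 - B > 1" using B by simp
  fix r assume r: "1 / (2 - B) < r" "r \<le> 1"
  define s where "s = (1 / (2 - B) + r)/2"
  have sR: "1 / (2 - B) < s" "s < r" using r by (auto simp: s_def)
  have h: "(2-B)* s > 1" using sR k by (simp add: field_simps)
  have "0 < 1 / (2 - B)" using k by simp
  hence s0: "s > 0" using sR(1) by linarith
  have s1: "s < 1" using sR r by simp
  have d: "1 + B*(-s) > 0"
  proof -
    have "\<bar>B\<bar> * s \<le> s" using s0 B by (simp add: mult_left_le_one_le)
    moreover have "\<bar>B * s\<bar> = \<bar>B\<bar> * s" using s0 by (simp add: abs_mult)
    ultimately have "\<bar>B * s\<bar> < 1" using s1 by linarith
    thus ?thesis by (simp add: abs_less_iff)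
  qed
  hence "1 + B*(-s) \<noteq> 0" by simp
  moreover have "(1 + 1*(-s))/(1 + B*(-s)) \<le> 1/2" using h d by (simp add: field_simps)
  ultimately have "\<not> inOm (Gj 1 B (complex_of_real (-s)))"
    by (intro not_inOm_Gj) auto
  moreover have "\<bar>-s\<bar> < r" using sR s0 by simp
  ultimately show "\<exists>x. \<bar>x\<bar> < r \<and> \<not> inOm (Gj 1 B (complex_of_real x))" by blast
qed

lemma part_iv:
  assumes M: "M > 1/2"
  shows "car_radius (S_janowski 1 (-(M - 1) / M)) = M / (3 * M - 1)"
proof -
  have M0: "M > 0" using M by simp
  have B1: "-1 < -(M - 1) / M" using M0 M by (simp add: field_simps)
  have B2: "-(M - 1) / M < 1" using M0 M by (simp add: field_simps)
  have "1 / (2 - (-(M - 1) / M)) = M / (3 * M - 1)" using M0 M by (simp add: field_simps)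
  thus ?thesis using part_ivB[OF B1 B2] by simp
qed


theorem corollary4p2:
  shows "(\<forall>\<alpha>::real. 0 \<le> \<alpha> \<and> \<alpha> \<le> 1/4 \<longrightarrow>
            car_radius (S_star_order \<alpha>) = 1 / (3 - 4*\<alpha>))
       \<and> (\<forall>\<alpha>::real. 1/4 < \<alpha> \<and> \<alpha> < 1 \<longrightarrow>
            car_radius (S_star_order \<alpha>) = 3 / (7 - 4*\<alpha>))
       \<and> (\<forall>\<alpha>::real. 0 < \<alpha> \<and> \<alpha> < 1/2 \<longrightarrow>
            car_radius (S_janowski (1 - \<alpha>) 0) = 1 / (2 * (1 - \<alpha>)))
       \<and> (\<forall>\<alpha>::real. 1/2 \<le> \<alpha> \<and> \<alpha> < 1 \<longrightarrow>
            car_radius (S_janowski (1 - \<alpha>) 0) = 1)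
       \<and> (\<forall>\<alpha>::real. 0 < \<alpha> \<and> \<alpha> \<le> 1/3 \<longrightarrow>
            car_radius (S_janowski \<alpha> (-\<alpha>)) = 1)
       \<and> (\<forall>\<alpha>::real. 1/3 < \<alpha> \<and> \<alpha> \<le> 1 \<longrightarrow>
            car_radius (S_janowski \<alpha> (-\<alpha>)) = 1 / (3 * \<alpha>))
       \<and> (\<forall>M::real. M > 1/2 \<longrightarrow>
            car_radius (S_janowski 1 (-(M - 1) / M)) = M / (3 * M - 1))"
  using part_i1 part_i2 part_ii1 part_ii2 part_iii1 part_iii2 part_iv by blast

end
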